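(* The set $\max(\mathbb{D})$ of maximal elements of $\mathbb{D}$ is contained in $C_\Phi$.
   Context: Fix a finite set $\mathrm{Act}$ of events. For a dcpo $D$, $K(D)$ denotes its compact elements; a bifinite (SFP) domain is an algebraic dcpo in which for each finite $F\subseteq K(D)$ iterated minimal-upper-bound sets are finite and in $K(D)$ and every upper bound of $F$ is above a minimal upper bound. Scott topology: sets $U={\uparrow}(U\cap K(D))$; Lawson topology generated by ${\uparrow}k\setminus{\uparrow}l$, $k,l\in K(D)$. Mixed powerdomain $\mathcal{M}(D)$: pairs $(L,U)$, $L$ Scott-closed, $U$ Lawson-closed upper, $L={\downarrow}(L\cap U)$, ordered by $L\subseteq L'$ and $U'\subseteq U$. $\mathbb{D}$ is the initial solution over bifinite domains of $\mathbb{D}\cong\prod_{\alpha\in\mathrm{Act}}\mathcal{M}(\mathbb{D})$, $d=((L^d_\alpha,U^d_\alpha))_\alpha$, viewed as a mixed transition system $(\mathbb{D},\mathbb{R}^a,\mathbb{R}^c)$ with $(d,\alpha,d')\in\mathbb{R}^a$ iff $d'\in L^d_\alpha$ and $(d,\alpha,d')\in\mathbb{R}^c$ iff $d'\in U^d_\alpha$. Hennessy–Milner logic: $\varphi::=tt\mid\neg\varphi\mid\langle\alpha\rangle\varphi\mid\varphi\wedge\varphi$; $[\alpha]\varphi:=\neg\langle\alpha\rangle\neg\varphi$, $\varphi\vee\psi:=\neg(\neg\varphi\wedge\neg\psi)$; empty conjunction $tt$, empty disjunction $\neg tt$. For $m\in\{a,c\}$ ($\neg a=c$, $\neg c=a$):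 $(\mathbb{D},d)\models^m tt$; $\models^m\neg\varphi$ iff not $\models^{\neg m}\varphi$; $(\mathbb{D},d)\models^m\langle\alpha\rangle\varphi$ iff $(\mathbb{D},d')\models^m\varphi$ for some $(d,\alpha,d')\in\mathbb{R}^m$; $\wedge$ componentwise. $[\![\varphi]\!]^m=\{d : (\mathbb{D},d)\models^m\varphi\}$. Process terms $p::=\mathbf{0}\mid\bot\mid\alpha_{tt}.p\mid\alpha_\bot.p\mid p+p$ (no summand of $+$ equal to $\mathbf{0}$ or $\bot$). Transitions: $\bot\xrightarrow{\gamma}_\bot\bot$ for all $\gamma$; $\alpha_{tt}.p\xrightarrow{\alpha}_{tt}p$; $\alpha_\bot.p\xrightarrow{\alpha}_\bot p$; if $p\xrightarrow{\alpha}_v p'$ then $p+q\xrightarrow{\alpha}_v p'$ and $q+p\xrightarrow{\alpha}_v p'$. Formulas: $\varphi_{\mathbf{0}}=\bigwedge_\alpha\neg\langle\alpha\rangle tt$; $\varphi_\bot=tt$; $\varphi_{\alpha_{tt}.p}=\langle\alpha\rangle\varphi_p\wedge[\alpha]\varphi_p\wedge\bigwedge_{\beta\ne\alpha}\neg\langle\beta\rangle tt$; $\varphi_{\alpha_\bot.p}=[\alpha]\varphi_p\wedge\bigwedge_{\beta\ne\alpha}\neg\langle\beta\rangle tt$; $\varphi_{p+q}=\bigwedge\{\langle\alpha\rangle\varphi_{r'} : p+q\xrightarrow{\alpha}_{tt}r'\}\wedge\bigwedge_\alpha[\alpha]\bigvee\{\varphi_{r'} : p+q\xrightarrow{\alpha}_v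 r',\ v\in\{\bot,tt\}\}$. For $w=\delta_1\cdots\delta_n\in\mathrm{Act}^*$, $\alpha\in\mathrm{Act}$, term $p$: $\psi_{w,\alpha,p}=[\delta_1]\cdots[\delta_n](\langle\alpha\rangle\varphi_p\vee\neg\langle\alpha\rangle\varphi_p)$; $\Phi$ is the set of all such formulas; $C_\Phi=\bigcap_{\psi\in\Phi}[\![\psi]\!]^a$. *)

theory Defs
  imports Main "HOL-Library.FSet"
begin

section \<open>The initial solution \<D> of D = prod_{alpha in Act} M(D), as a concrete bilimit\<close>

text \<open>Act is the type variable 'a of class enum (a finite type with an enumeration).
Elements of the finite approximants D_n are represented as trees:
D_0 = {Bot}, D_(n+1) = prod_alpha M(D_n), an element being Nd f with
f alpha = (L,U) a mixed-powerdomain pair of (finite) subsets of D_n.\<close>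

datatype 'a el = Bot | Nd "'a \<Rightarrow> 'a el fset \<times> 'a el fset"

fun le :: "'a el \<Rightarrow> 'a el \<Rightarrow> bool" where
  "le Bot Bot = True"
| "le (Nd f) (Nd g) = (\<forall>\<alpha>. fst (f \<alpha>) |\<subseteq>| fst (g \<alpha>) \<and> snd (g \<alpha>) |\<subseteq>| snd (f \<alpha>))"
| "le _ _ = False"

text \<open>Mixed powerdomain of a finite poset S: L Scott-closed (= down-closed),
U Lawson-closed upper (= up-closed), L = down-closure of L \<inter> U.\<close>
definition mixedpair :: "'a el set \<Rightarrow> 'a el fset \<times> 'a el fset \<Rightarrow> bool" where
  "mixedpair S LU \<longleftrightarrow>
     fset (fst LU) \<subseteq> S \<and> fset (snd LU) \<subseteq> S \<and>
     (\<forall>x\<in>fset (fst LU). \<forall>y\<in>S. le y x \<longrightarrow> y \<in> fset (fst LU)) \<and>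
     (\<forall>x\<in>fset (snd LU). \<forall>y\<in>S. le x y \<longrightarrow> y \<in> fset (snd LU)) \<and>
     (\<forall>x\<in>fset (fst LU). \<exists>z\<in>fset (fst LU) \<inter> fset (snd LU). le x z)"

fun lvl :: "nat \<Rightarrow> 'a el set" where
  "lvl 0 = {Bot}"
| "lvl (Suc n) = {Nd f | f. \<forall>\<alpha>. mixedpair (lvl n) (f \<alpha>)}"

definition dcl :: "nat \<Rightarrow> 'a el fset \<Rightarrow> 'a el fset" where
  "dcl n A = Abs_fset {y \<in> lvl n. \<exists>x\<in>fset A. le y x}"

definition ucl :: "nat \<Rightarrow> 'a el fset \<Rightarrow> 'a el fset" where
  "ucl n A = Abs_fset {y \<in> lvl n. \<exists>x\<in>fset A. le x y}"

text \<open>Projections p_n : D_(n+1) \<rightarrow> D_n; p_0 is constant, p_(n+1) = prod_alpha M(p_n),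
where M(f)(L,U) = (down-closure of f[L], up-closure of f[U]).\<close>
fun proj :: "nat \<Rightarrow> 'a el \<Rightarrow> 'a el" where
  "proj 0 x = Bot"
| "proj (Suc n) (Nd f) =
     Nd (\<lambda>\<alpha>. (dcl n (proj n |`| fst (f \<alpha>)), ucl n (proj n |`| snd (f \<alpha>))))"
| "proj (Suc n) Bot = Bot"

definition Dinf :: "(nat \<Rightarrow> 'a el) set" where
  "Dinf = {x. \<forall>n. x n \<in> lvl n \<and> proj n (x (Suc n)) = x n}"

definition leD :: "(nat \<Rightarrow> 'a el) \<Rightarrow> (nat \<Rightarrow> 'a el) \<Rightarrow> bool" where
  "leD x y \<longleftrightarrow> (\<forall>n. le (x n) (y n))"

definition maxD :: "(nat \<Rightarrow> 'a el) set" where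
  "maxD = {x \<in> Dinf. \<forall>y\<in>Dinf. leD x y \<longrightarrow> y = x}"

text \<open>Mixed transition relations: mode True = a (may, L-component),
mode False = c (must, U-component). Under the canonical isomorphism
\<D> \<cong> prod M(\<D>), d' \<in> L^d_alpha iff d'_n \<in> L-component of d_(n+1) at alpha for all n
(similarly for U).\<close>
definition comp :: "bool \<Rightarrow> 'a el \<Rightarrow> 'a \<Rightarrow> 'a el fset" where
  "comp m x \<alpha> = (case x of Bot \<Rightarrow> {||} | Nd f \<Rightarrow> (if m then fst (f \<alpha>) else snd (f \<alpha>)))"

definition Rel :: "bool \<Rightarrow> (nat \<Rightarrow> 'a el) \<Rightarrow> 'a \<Rightarrow> (nat \<Rightarrow> 'a el) \<Rightarrow> bool" where
  "Rel m d \<alpha> d' \<longleftrightarrow> d \<in> Dinf \<and> d' \<in> Dinf \<and> (\<forall>n. d' n |\<in>| comp m (d (Suc n)) \<alpha>)"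

datatype 'a hml = TT | Neg "'a hml" | Dia 'a "'a hml" | Conj "'a hml" "'a hml"

definition Box :: "'a \<Rightarrow> 'a hml \<Rightarrow> 'a hml" where
  "Box \<alpha> \<phi> = Neg (Dia \<alpha> (Neg \<phi>))"

definition Disj :: "'a hml \<Rightarrow> 'a hml \<Rightarrow> 'a hml" where
  "Disj \<phi> \<psi> = Neg (Conj (Neg \<phi>) (Neg \<psi>))"

definition Conjs :: "'a hml list \<Rightarrow> 'a hml" where
  "Conjs xs = foldr Conj xs TT"

definition Disjs :: "'a hml list \<Rightarrow> 'a hml" where
  "Disjs xs = Neg (Conjs (map Neg xs))"

fun sat :: "bool \<Rightarrow> (nat \<Rightarrow> 'a el) \<Rightarrow> 'a hml \<Rightarrow> bool" where
  "sat m d TT = True"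
| "sat m d (Neg \<phi>) = (\<not> sat (\<not> m) d \<phi>)"
| "sat m d (Dia \<alpha> \<phi>) = (\<exists>d'. Rel m d \<alpha> d' \<and> sat m d' \<phi>)"
| "sat m d (Conj \<phi> \<psi>) = (sat m d \<phi> \<and> sat m d \<psi>)"

datatype 'a pterm = Zero | PBot | PreT 'a "'a pterm" | PreB 'a "'a pterm"
  | Plus "'a pterm" "'a pterm"

fun wf_term :: "'a pterm \<Rightarrow> bool" where
  "wf_term Zero = True"
| "wf_term PBot = True"
| "wf_term (PreT a p) = wf_term p"
| "wf_term (PreB a p) = wf_term p"
| "wf_term (Plus p q) = (wf_term p \<and> wf_term q \<and> p \<notin> {Zero, PBot} \<and> q \<notin> {Zero, PBot})"

definition noOther :: "'a::enum \<Rightarrow> 'a hml" where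
  "noOther \<alpha> = Conjs [Neg (Dia \<beta> TT). \<beta> \<leftarrow> Enum.enum, \<beta> \<noteq> \<alpha>]"

text \<open>phi computes the characteristic formula; tphi computes, for each transition
p --alpha-->_v r, the triple (alpha, v, phi r).\<close>
fun phi :: "'a::enum pterm \<Rightarrow> 'a hml"
and tphi :: "'a::enum pterm \<Rightarrow> ('a \<times> bool \<times> 'a hml) list" where
  "phi Zero = Conjs [Neg (Dia \<alpha> TT). \<alpha> \<leftarrow> Enum.enum]"
| "phi PBot = TT"
| "phi (PreT a p) = Conj (Dia a (phi p)) (Conj (Box a (phi p)) (noOther a))"
| "phi (PreB a p) = Conj (Box a (phi p)) (noOther a)"
| "phi (Plus p q) =
     Conj (Conjs [Dia \<alpha> f. (\<alpha>, v, f) \<leftarrow> tphi p @ tphi q, v])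
          (Conjs [Box \<alpha> (Disjs [f. (\<beta>, v, f) \<leftarrow> tphi p @ tphi q, \<beta> = \<alpha>]). \<alpha> \<leftarrow> Enum.enum])"
| "tphi Zero = []"
| "tphi PBot = map (\<lambda>\<gamma>. (\<gamma>, False, TT)) Enum.enum"
| "tphi (PreT a p) = [(a, True, phi p)]"
| "tphi (PreB a p) = [(a, False, phi p)]"
| "tphi (Plus p q) = tphi p @ tphi q"

definition psi :: "'a list \<Rightarrow> 'a::enum \<Rightarrow> 'a pterm \<Rightarrow> 'a hml" where
  "psi w \<alpha> p = foldr Box w (Disj (Dia \<alpha> (phi p)) (Neg (Dia \<alpha> (phi p))))"

definition PhiSet :: "'a::enum hml set" where
  "PhiSet = {psi w \<alpha> p | w \<alpha> p. wf_term p}"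

definition CPhi :: "(nat \<Rightarrow> 'a::enum el) set" where
  "CPhi = {d \<in> Dinf. \<forall>\<psi>\<in>PhiSet. sat True d \<psi>}"

end

theory Submission
  imports Defs "HOL-Library.FuncSet"
begin

lemma le_refl[simp]: "le x x"
  by (cases x) auto

lemma le_trans: "le x y \<Longrightarrow> le y z \<Longrightarrow> le x z"
  by (cases x; cases y; cases z) (simp_all add: less_eq_fset.rep_eq, blast)

lemma le_antisym: "le x y \<Longrightarrow> le y x \<Longrightarrow> x = y"
proof (cases x; cases y)
  fix f g assume "le x y" "le y x" "x = Nd f" "y = Nd g"
  then have "f = g"
    by (intro ext prod_eqI) (auto intro: fsubset_antisym)
  then show "x = y" using \<open>x = Nd f\<close> \<open>y = Nd g\<close> by simp
qed auto

lemma fset_Abs: "finite S \<Longrightarrow> fset (Abs_fset S) = S"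
  by (simp add: Abs_fset_inverse)

lemma finite_fsets: "finite S \<Longrightarrow> finite {A :: 'b fset. fset A \<subseteq> S}"
proof -
  assume "finite S"
  have "{A :: 'b fset. fset A \<subseteq> S} \<subseteq> Abs_fset ` Pow S"
    by (auto intro!: image_eqI[where x="fset _"] simp: fset_inverse)
  then show ?thesis using \<open>finite S\<close> by (meson finite_Pow_iff finite_imageI finite_subset)
qed

lemma finite_lvl: "finite (lvl n :: ('a::finite) el set)"
proof (induction n)
  case 0 then show ?case by simp
next
  case (Suc n)
  define B where "B = {A :: 'a el fset. fset A \<subseteq> lvl n} \<times> {A :: 'a el fset. fset A \<subseteq> lvl n}"
  have fB: "finite B" unfolding B_def using Suc finite_fsets by blast
  have "lvl (Suc n) \<subseteq> Nd ` (Pi\<^sub>E (UNIV :: 'a set) (\<lambda>_. B))"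
  proof
    fix x :: "'a el" assume "x \<in> lvl (Suc n)"
    then obtain f where f: "x = Nd f" "\<forall>\<alpha>. mixedpair (lvl n) (f \<alpha>)" by auto
    have "f \<in> Pi\<^sub>E (UNIV :: 'a set) (\<lambda>_. B)"
      using f(2) unfolding PiE_UNIV_domain Pi_iff B_def mixedpair_def by (simp add: mem_Times_iff)
    then show "x \<in> Nd ` (Pi\<^sub>E (UNIV :: 'a set) (\<lambda>_. B))" using f(1) by blast
  qed
  moreover have "finite (Pi\<^sub>E (UNIV :: 'a set) (\<lambda>_. B))"
    using fB by (intro finite_PiE) auto
  ultimately show ?case by (meson finite_imageI finite_subset)
qed

lemma fset_dcl[simp]: "fset (dcl n A) = {y \<in> lvl n. \<exists>x\<in>fset A. le y x}"
  for A :: "('a::finite) el fset"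
  unfolding dcl_def by (rule fset_Abs) (auto intro: finite_subset[OF _ finite_lvl])

lemma fset_ucl[simp]: "fset (ucl n A) = {y \<in> lvl n. \<exists>x\<in>fset A. le x y}"
  for A :: "('a::finite) el fset"
  unfolding ucl_def by (rule fset_Abs) (auto intro: finite_subset[OF _ finite_lvl])

lemma proj_mono: "le a b \<Longrightarrow> le (proj k a) (proj k b)"
  for a b :: "('a::finite) el"
  by (cases k; cases a; cases b) (auto simp: less_eq_fset.rep_eq)

lemma lvl_Suc_ex: "x \<in> lvl (Suc n) \<Longrightarrow> \<exists>f. x = Nd f \<and> (\<forall>\<alpha>. mixedpair (lvl n) (f \<alpha>))"
  by simp

lemma proj_lvl: "x \<in> lvl (Suc k) \<Longrightarrow> proj k x \<in> lvl k"
  for x :: "('a::finite) el"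
proof (induction k arbitrary: x)
  case 0 then show ?case by simp
next
  case (Suc k)
  from Suc.prems obtain f where x: "x = Nd f" and mp: "\<And>\<alpha>. mixedpair (lvl (Suc k)) (f \<alpha>)"
    using lvl_Suc_ex[OF Suc.prems] by blast
  have "mixedpair (lvl k) (dcl k (proj k |`| fst (f \<alpha>)), ucl k (proj k |`| snd (f \<alpha>)))" for \<alpha>
  proof -
    from mp[of \<alpha>] have A: "fset (fst (f \<alpha>)) \<subseteq> lvl (Suc k)"
      and B: "\<forall>x\<in>fset (fst (f \<alpha>)). \<exists>z\<in>fset (fst (f \<alpha>)) \<inter> fset (snd (f \<alpha>)). le x z"
      unfolding mixedpair_def by auto
    show ?thesis unfolding mixedpair_def fst_conv snd_conv
    proof (intro conjI ballI impI)
      fix y assume "y \<in> fset (dcl k (proj k |`| fst (f \<alpha>)))"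
      then obtain l where y: "y \<in> lvl k" "l \<in> fset (fst (f \<alpha>))" "le y (proj k l)" by auto
      from B y(2) obtain z where z: "z \<in> fset (fst (f \<alpha>))" "z \<in> fset (snd (f \<alpha>))" "le l z" by auto
      have "proj k z \<in> lvl k" using Suc.IH A z(1) by auto
      moreover have "le y (proj k z)" using y(3) proj_mono[OF z(3)] le_trans by blast
      moreover have "proj k z \<in> fset (dcl k (proj k |`| fst (f \<alpha>)))"
        using z(1) \<open>proj k z \<in> lvl k\<close> by (auto intro!: bexI[where x=z])
      moreover have "proj k z \<in> fset (ucl k (proj k |`| snd (f \<alpha>)))"
        using z(2) \<open>proj k z \<in> lvl k\<close> by (auto intro!: bexI[where x=z])
      ultimately show "\<exists>z\<in>fset (dcl k (proj k |`| fst (f \<alpha>)))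
         \<inter> fset (ucl k (proj k |`| snd (f \<alpha>))). le y z"
        by (intro bexI[where x="proj k z"]) auto
    qed (auto intro: le_trans)
  qed
  then show ?case using x by simp
qed

lemma mp_iff: "mixedpair S (L,U) \<longleftrightarrow> fset L \<subseteq> S \<and> fset U \<subseteq> S \<and>
   (\<forall>x\<in>fset L. \<forall>y\<in>S. le y x \<longrightarrow> y \<in> fset L) \<and>
   (\<forall>x\<in>fset U. \<forall>y\<in>S. le x y \<longrightarrow> y \<in> fset U) \<and>
   (\<forall>x\<in>fset L. \<exists>z\<in>fset L \<inter> fset U. le x z)"
  by (simp add: mixedpair_def)

lemma uplift_pair:
  fixes L U L' U' :: "('a::finite) el fset"
  assumes IH: "\<And>y0 x :: 'a el. y0 \<in> lvl (Suc k) \<Longrightarrow> x \<in> lvl k \<Longrightarrow> le (proj k y0) x \<Longrightarrow>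
                  \<exists>y\<in>lvl (Suc k). le y0 y \<and> proj k y = x"
    and mp1: "mixedpair (lvl (Suc k)) (L, U)" and mp2: "mixedpair (lvl k) (L', U')"
    and h1: "\<And>w l. w \<in> lvl k \<Longrightarrow> l \<in> fset L \<Longrightarrow> le w (proj k l) \<Longrightarrow> w \<in> fset L'"
    and h2: "\<And>w. w \<in> fset U' \<Longrightarrow> \<exists>u\<in>fset U. le (proj k u) w"
  shows "\<exists>L'' U''. mixedpair (lvl (Suc k)) (L'', U'') \<and> fset L \<subseteq> fset L'' \<and> fset U'' \<subseteq> fset U
            \<and> dcl k (proj k |`| L'') = L' \<and> ucl k (proj k |`| U'') = U'"
proof -
  have L1: "fset L \<subseteq> lvl (Suc k)" and U1: "fset U \<subseteq> lvl (Suc k)"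
    and Ld: "\<And>x y. x \<in> fset L \<Longrightarrow> y \<in> lvl (Suc k) \<Longrightarrow> le y x \<Longrightarrow> y \<in> fset L"
    and Uu: "\<And>x y. x \<in> fset U \<Longrightarrow> y \<in> lvl (Suc k) \<Longrightarrow> le x y \<Longrightarrow> y \<in> fset U"
    and Lc: "\<And>x. x \<in> fset L \<Longrightarrow> \<exists>z\<in>fset L \<inter> fset U. le x z"
    using mp1 unfolding mp_iff by blast+
  have L2: "fset L' \<subseteq> lvl k" and U2: "fset U' \<subseteq> lvl k"
    and Ld2: "\<And>x y. x \<in> fset L' \<Longrightarrow> y \<in> lvl k \<Longrightarrow> le y x \<Longrightarrow> y \<in> fset L'"
    and Uu2: "\<And>x y. x \<in> fset U' \<Longrightarrow> y \<in> lvl k \<Longrightarrow> le x y \<Longrightarrow> y \<in> fset U'"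
    and Lc2: "\<And>x. x \<in> fset L' \<Longrightarrow> \<exists>z\<in>fset L' \<inter> fset U'. le x z"
    using mp2 unfolding mp_iff by blast+
  have lift: "\<exists>c. c \<in> fset U \<and> le u c \<and> proj k c = z' \<and> c \<in> lvl (Suc k)"
    if "u \<in> fset U" "z' \<in> lvl k" "le (proj k u) z'" for u z'
  proof -
    from IH[of u z'] that U1 obtain c where "c \<in> lvl (Suc k)" "le u c" "proj k c = z'" by blast
    then show ?thesis using Uu that(1) by blast
  qed
  define C where "C = {u \<in> fset U. proj k u \<in> fset U' \<and> proj k u \<in> fset L'}"
  define U'' where "U'' = Abs_fset {u \<in> fset U. proj k u \<in> fset U'}"
  define L'' where "L'' = Abs_fset {y \<in> lvl (Suc k). \<exists>c\<in>C. le y c}"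
  have fU: "fset U'' = {u \<in> fset U. proj k u \<in> fset U'}"
    unfolding U''_def by (rule fset_Abs) simp
  have fL: "fset L'' = {y \<in> lvl (Suc k). \<exists>c\<in>C. le y c}"
    unfolding L''_def by (rule fset_Abs) (rule finite_subset[OF _ finite_lvl[of "Suc k"]], blast)
  have CU: "C \<subseteq> fset U''" unfolding fU C_def by auto
  have CL: "C \<subseteq> fset L''" unfolding fL C_def using U1 by auto
  have "mixedpair (lvl (Suc k)) (L'', U'')"
    unfolding mp_iff
  proof (intro conjI ballI impI)
    fix x y assume "x \<in> fset U''" "y \<in> lvl (Suc k)" "le x y"
    then show "y \<in> fset U''" unfolding fU
      using Uu Uu2 proj_mono[of x y k] proj_lvl[of y k] by blast
  next
    fix x assume "x \<in> fset L''"
    then obtain c where "c \<in> C" "le x c" unfolding fL by blast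
    then show "\<exists>z\<in>fset L'' \<inter> fset U''. le x z" using CU CL by blast
  qed (auto simp: fL fU intro: le_trans dest: subsetD[OF U1])
  moreover have "fset L \<subseteq> fset L''"
  proof
    fix l assume l: "l \<in> fset L"
    then obtain z where z: "z \<in> fset L" "z \<in> fset U" "le l z" using Lc by blast
    have pz: "proj k z \<in> lvl k" using proj_lvl z(2) U1 by blast
    then have "proj k z \<in> fset L'" using h1 z(1) by auto
    then obtain z' where z': "z' \<in> fset L'" "z' \<in> fset U'" "le (proj k z) z'" using Lc2 by blast
    then obtain c where c: "c \<in> fset U" "le z c" "proj k c = z'" "c \<in> lvl (Suc k)"
      using lift[of z z'] z(2) L2 by blast
    have "c \<in> C" unfolding C_def using c z' by auto
    then show "l \<in> fset L''" unfolding fL using l L1 le_trans[OF z(3) c(2)] by blast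
  qed
  moreover have "fset U'' \<subseteq> fset U" unfolding fU by auto
  moreover have "dcl k (proj k |`| L'') = L'"
  proof (rule fset_eqI, rule iffI)
    fix w assume "w |\<in>| dcl k (proj k |`| L'')"
    then obtain m where m: "w \<in> lvl k" "m \<in> fset L''" "le w (proj k m)" by auto
    then obtain c where c: "c \<in> C" "le m c" unfolding fL by blast
    have "le w (proj k c)" using m(3) proj_mono[OF c(2)] le_trans by blast
    then show "w |\<in>| L'" using Ld2[of "proj k c" w] c(1) m(1) unfolding C_def by blast
  next
    fix w assume w: "w |\<in>| L'"
    then obtain z' where z': "z' \<in> fset L'" "z' \<in> fset U'" "le w z'" using Lc2 by blast
    obtain u where u: "u \<in> fset U" "le (proj k u) z'" using h2 z'(2) by blast
    obtain c where c: "c \<in> fset U" "le u c" "proj k c = z'" "c \<in> lvl (Suc k)"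
      using lift[OF u(1) _ u(2)] z'(1) L2 by blast
    have "c \<in> C" unfolding C_def using c z' by auto
    then have "c \<in> fset L''" using CL by blast
    then show "w |\<in>| dcl k (proj k |`| L'')" using w L2 z'(3) c(3) by auto
  qed
  moreover have "ucl k (proj k |`| U'') = U'"
  proof (rule fset_eqI, rule iffI)
    fix w assume "w |\<in>| ucl k (proj k |`| U'')"
    then obtain m where m: "w \<in> lvl k" "m \<in> fset U''" "le (proj k m) w" by auto
    then show "w |\<in>| U'" using Uu2[of "proj k m" w] unfolding fU by blast
  next
    fix w assume w: "w |\<in>| U'"
    obtain u where u: "u \<in> fset U" "le (proj k u) w" using h2 w by blast
    obtain c where c: "c \<in> fset U" "le u c" "proj k c = w" "c \<in> lvl (Suc k)"
      using lift[OF u(1) _ u(2)] w U2 by blast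
    have "c \<in> fset U''" unfolding fU using c w by auto
    then show "w |\<in>| ucl k (proj k |`| U'')" using w U2 c(3) by (auto intro!: bexI[where x=c])
  qed
  ultimately show ?thesis by blast
qed

lemma uplift:
  fixes y0 x :: "('a::finite) el"
  shows "y0 \<in> lvl (Suc k) \<Longrightarrow> x \<in> lvl k \<Longrightarrow> le (proj k y0) x \<Longrightarrow>
         \<exists>y\<in>lvl (Suc k). le y0 y \<and> proj k y = x"
proof (induction k arbitrary: y0 x)
  case 0 then show ?case by (intro bexI[of _ y0]) auto
next
  case (Suc k)
  obtain f where y0: "y0 = Nd f" and mpf: "\<forall>\<alpha>. mixedpair (lvl (Suc k)) (f \<alpha>)"
    using lvl_Suc_ex[OF Suc.prems(1)] by blast
  obtain g where x: "x = Nd g" and mpg: "\<forall>\<alpha>. mixedpair (lvl k) (g \<alpha>)"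
    using lvl_Suc_ex[OF Suc.prems(2)] by blast
  have ex: "\<exists>h. mixedpair (lvl (Suc k)) h \<and> fset (fst (f \<alpha>)) \<subseteq> fset (fst h) \<and> fset (snd h) \<subseteq> fset (snd (f \<alpha>))
     \<and> dcl k (proj k |`| fst h) = fst (g \<alpha>) \<and> ucl k (proj k |`| snd h) = snd (g \<alpha>)" for \<alpha>
  proof -
    have le1: "dcl k (proj k |`| fst (f \<alpha>)) |\<subseteq>| fst (g \<alpha>)" "snd (g \<alpha>) |\<subseteq>| ucl k (proj k |`| snd (f \<alpha>))"
      using Suc.prems(3) y0 x by auto
    obtain L U where LU: "f \<alpha> = (L,U)" by force
    obtain L' U' where LU': "g \<alpha> = (L',U')" by force
    have "\<exists>L'' U''. mixedpair (lvl (Suc k)) (L'', U'') \<and> fset L \<subseteq> fset L'' \<and> fset U'' \<subseteq> fset U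
            \<and> dcl k (proj k |`| L'') = L' \<and> ucl k (proj k |`| U'') = U'"
    proof (rule uplift_pair)
      show "\<And>y0 x :: 'a el. y0 \<in> lvl (Suc k) \<Longrightarrow> x \<in> lvl k \<Longrightarrow> le (proj k y0) x \<Longrightarrow>
                  \<exists>y\<in>lvl (Suc k). le y0 y \<and> proj k y = x" by (rule Suc.IH)
      show "mixedpair (lvl (Suc k)) (L, U)" using mpf LU by metis
      show "mixedpair (lvl k) (L', U')" using mpg LU' by metis
      show "w \<in> fset L'" if "w \<in> lvl k" "l \<in> fset L" "le w (proj k l)" for w l
      proof -
        have "w |\<in>| dcl k (proj k |`| fst (f \<alpha>))" using that LU by auto
        then show ?thesis using le1(1) LU' by (metis fst_conv fsubsetD)
      qed
      show "\<exists>u\<in>fset U. le (proj k u) w" if "w \<in> fset U'" for w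
      proof -
        have "w |\<in>| ucl k (proj k |`| snd (f \<alpha>))" using that le1(2) LU' by auto
        then show ?thesis using LU by auto
      qed
    qed
    then show ?thesis using LU LU' by (metis fst_conv snd_conv)
  qed
  then obtain H where H: "\<And>\<alpha>. mixedpair (lvl (Suc k)) (H \<alpha>) \<and> fset (fst (f \<alpha>)) \<subseteq> fset (fst (H \<alpha>))
     \<and> fset (snd (H \<alpha>)) \<subseteq> fset (snd (f \<alpha>))
     \<and> dcl k (proj k |`| fst (H \<alpha>)) = fst (g \<alpha>) \<and> ucl k (proj k |`| snd (H \<alpha>)) = snd (g \<alpha>)"
    by metis
  have "Nd H \<in> lvl (Suc (Suc k))" using H by simp
  moreover have "le y0 (Nd H)" using H y0 by (simp add: less_eq_fset.rep_eq)
  moreover have "proj (Suc k) (Nd H) = x"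
    using H x by (simp del: fset_dcl fset_ucl)
  ultimately show ?case by blast
qed

definition maxlvl :: "nat \<Rightarrow> ('a::finite) el set" where
  "maxlvl n = {x \<in> lvl n. \<forall>y\<in>lvl n. le x y \<longrightarrow> y = x}"

lemma maxD_lvl:
  fixes d :: "nat \<Rightarrow> ('a::finite) el"
  assumes d: "d \<in> maxD"
  shows "d n \<in> maxlvl n"
proof -
  have dD: "d \<in> Dinf" and dm: "\<And>y. y \<in> Dinf \<Longrightarrow> leD d y \<Longrightarrow> y = d" using d by (auto simp: maxD_def)
  have dl: "\<And>m. d m \<in> lvl m" and dp: "\<And>m. proj m (d (Suc m)) = d m" using dD by (auto simp: Dinf_def)
  show ?thesis unfolding maxlvl_def
  proof (intro CollectI conjI ballI impI)
    show "d n \<in> lvl n" by (rule dl)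
    fix x assume x: "x \<in> lvl n" "le (d n) x"
    define P where "P = rec_nat x (\<lambda>j z. proj (n - Suc j) z)"
    have P0: "P 0 = x" and PS: "\<And>j. P (Suc j) = proj (n - Suc j) (P j)" by (simp_all add: P_def)
    define Y where "Y = rec_nat x (\<lambda>j z. SOME y. y \<in> lvl (Suc (n+j)) \<and> le (d (Suc (n+j))) y \<and> proj (n+j) y = z)"
    have Y0: "Y 0 = x" and YS: "\<And>j. Y (Suc j) = (SOME y. y \<in> lvl (Suc (n+j)) \<and> le (d (Suc (n+j))) y \<and> proj (n+j) y = Y j)"
      by (simp_all add: Y_def)
    have Yp: "Y j \<in> lvl (n+j) \<and> le (d (n+j)) (Y j) \<and> proj (n+j) (Y (Suc j)) = Y j" for j
    proof (induction j)
      case 0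
      have "\<exists>y\<in>lvl (Suc n). le (d (Suc n)) y \<and> proj n y = x"
        by (rule uplift[OF dl]) (use x dp in \<open>simp_all del: lvl.simps\<close>)
      then have "\<exists>y. y \<in> lvl (Suc (n+0)) \<and> le (d (Suc (n+0))) y \<and> proj (n+0) y = Y 0"
        using Y0 by simp
      then have "proj (n+0) (Y (Suc 0)) = Y 0" unfolding YS by (rule someI2_ex) blast
      then show ?case using x Y0 by simp
    next
      case (Suc j)
      have "\<exists>y\<in>lvl (Suc (n+j)). le (d (Suc (n+j))) y \<and> proj (n+j) y = Y j"
        by (rule uplift[OF dl]) (use Suc.IH dp in \<open>simp_all del: lvl.simps\<close>)
      then have "\<exists>y. y \<in> lvl (Suc (n+j)) \<and> le (d (Suc (n+j))) y \<and> proj (n+j) y = Y j"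
        by blast
      then have A: "Y (Suc j) \<in> lvl (Suc (n+j)) \<and> le (d (Suc (n+j))) (Y (Suc j))"
        unfolding YS by (rule someI2_ex) blast
      have "\<exists>y\<in>lvl (Suc (n+Suc j)). le (d (Suc (n+Suc j))) y \<and> proj (n+Suc j) y = Y (Suc j)"
        by (rule uplift[OF dl]) (use A dp in \<open>simp_all del: lvl.simps\<close>)
      then have "\<exists>y. y \<in> lvl (Suc (n+Suc j)) \<and> le (d (Suc (n+Suc j))) y \<and> proj (n+Suc j) y = Y (Suc j)"
        by blast
      then have "proj (n+Suc j) (Y (Suc (Suc j))) = Y (Suc j)" unfolding YS[of "Suc j"] by (rule someI2_ex) blast
      then show ?case using A by simp
    qed
    have Pp: "j \<le> n \<Longrightarrow> P j \<in> lvl (n-j) \<and> le (d (n-j)) (P j)" for j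
    proof (induction j)
      case 0 then show ?case using x P0 by simp
    next
      case (Suc j)
      then have IH: "P j \<in> lvl (Suc (n - Suc j))" "le (d (Suc (n - Suc j))) (P j)"
        by (simp_all add: Suc_diff_Suc)
      show ?case using proj_lvl[OF IH(1)] proj_mono[OF IH(2), of "n - Suc j"] dp PS by simp
    qed
    define y where "y = (\<lambda>m. if m \<le> n then P (n - m) else Y (m - n))"
    have yl: "y m \<in> lvl m \<and> le (d m) (y m)" for m
    proof (cases "m \<le> n")
      case True then show ?thesis using Pp[of "n-m"] by (simp add: y_def)
    next
      case False then show ?thesis using Yp[of "m-n"] by (simp add: y_def)
    qed
    have yp: "proj m (y (Suc m)) = y m" for m
    proof -
      consider "Suc m \<le> n" | "m = n" | "n < m" by linarith
      then show ?thesis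
      proof cases
        case 1
        then have "n - m = Suc (n - Suc m)" by simp
        then show ?thesis using 1 PS[of "n - Suc m"] by (simp add: y_def)
      next
        case 2 then show ?thesis using Yp[of 0] P0 Y0 by (simp add: y_def)
      next
        case 3
        then have "Suc m - n = Suc (m - n)" by simp
        then show ?thesis using 3 Yp[of "m - n"] by (simp add: y_def)
      qed
    qed
    have "y \<in> Dinf" using yl yp by (simp add: Dinf_def)
    moreover have "leD d y" using yl by (simp add: leD_def)
    ultimately have "y = d" by (rule dm)
    then show "x = d n" using P0 by (metis y_def diff_self_eq_0 order_refl)
  qed
qed

lemma max_upd:
  fixes f :: "'a::finite \<Rightarrow> 'a el fset \<times> 'a el fset"
  assumes m: "Nd f \<in> maxlvl (Suc n)" and mp: "mixedpair (lvl n) (L', U')"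
    and s1: "fset (fst (f \<alpha>)) \<subseteq> fset L'" and s2: "fset U' \<subseteq> fset (snd (f \<alpha>))"
  shows "f \<alpha> = (L', U')"
proof -
  have xl: "\<forall>\<beta>. mixedpair (lvl n) (f \<beta>)" and xm: "\<And>y. y \<in> lvl (Suc n) \<Longrightarrow> le (Nd f) y \<Longrightarrow> y = Nd f"
    using m unfolding maxlvl_def by auto
  have "Nd (f(\<alpha> := (L', U'))) \<in> lvl (Suc n)" using xl mp by simp
  moreover have "le (Nd f) (Nd (f(\<alpha> := (L', U'))))"
    using s1 s2 by (simp add: less_eq_fset.rep_eq)
  ultimately have "Nd (f(\<alpha> := (L', U'))) = Nd f" by (rule xm)
  then have "f(\<alpha> := (L', U')) = f" by simp
  then show ?thesis by (metis fun_upd_same)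
qed

lemma max_U:
  fixes f :: "'a::finite \<Rightarrow> 'a el fset \<times> 'a el fset"
  assumes m: "Nd f \<in> maxlvl (Suc n)" and u: "u \<in> fset (snd (f \<alpha>))"
  shows "u \<in> fset (fst (f \<alpha>)) \<and> u \<in> maxlvl n"
proof -
  have xl: "\<forall>\<beta>. mixedpair (lvl n) (f \<beta>)" using m unfolding maxlvl_def by auto
  obtain L U where LU: "f \<alpha> = (L, U)" by force
  have L1: "fset L \<subseteq> lvl n" and U1: "fset U \<subseteq> lvl n"
    and Ld: "\<And>x y. x \<in> fset L \<Longrightarrow> y \<in> lvl n \<Longrightarrow> le y x \<Longrightarrow> y \<in> fset L"
    and Uu: "\<And>x y. x \<in> fset U \<Longrightarrow> y \<in> lvl n \<Longrightarrow> le x y \<Longrightarrow> y \<in> fset U"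
    and Lc: "\<And>x. x \<in> fset L \<Longrightarrow> \<exists>z\<in>fset L \<inter> fset U. le x z"
    using xl LU unfolding mp_iff by (metis mp_iff)+
  have fin: "finite {y \<in> (lvl n :: 'a el set). P y}" for P by (rule finite_subset[OF _ finite_lvl]) blast
  have inL: "w \<in> fset L" if w: "w \<in> fset U" for w
  proof -
    define L' where "L' = Abs_fset (fset L \<union> {y \<in> lvl n. le y w})"
    have fL': "fset L' = fset L \<union> {y \<in> lvl n. le y w}"
      unfolding L'_def by (rule fset_Abs) (use fin in simp)
    have wl: "w \<in> lvl n" using w U1 by blast
    have "mixedpair (lvl n) (L', U)" unfolding mp_iff fL'
    proof (intro conjI ballI impI)
      fix x assume "x \<in> fset L \<union> {y \<in> lvl n. le y w}"
      then show "\<exists>z\<in>(fset L \<union> {y \<in> lvl n. le y w}) \<inter> fset U. le x z"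
        using Lc w wl by (metis (no_types, lifting) Int_iff UnCI le_refl mem_Collect_eq UnE)
    next
      fix x y assume "x \<in> fset L \<union> {y \<in> lvl n. le y w}" "y \<in> lvl n" "le y x"
      then show "y \<in> fset L \<union> {y \<in> lvl n. le y w}" using Ld le_trans by blast
    qed (use L1 U1 Uu in auto)
    then have "f \<alpha> = (L', U)" by (rule max_upd[OF m]) (auto simp: LU fL')
    then have "L' = L" using LU by simp
    moreover have "w \<in> fset L'" using fL' wl by simp
    ultimately show ?thesis by simp
  qed
  have ul: "u \<in> lvl n" using u U1 LU by auto
  have "u \<in> maxlvl n" unfolding maxlvl_def
  proof (intro CollectI conjI ballI impI ul)
    fix v assume v: "v \<in> lvl n" "le u v"
    show "v = u"
    proof (rule ccontr)
      assume vu: "v \<noteq> u"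
      have vU: "v \<in> fset U" using Uu[of u v] u LU v by auto
      have vL: "v \<in> fset L" using inL vU by blast
      have nvu: "\<not> le v u" using le_antisym v(2) vu by blast
      define U' where "U' = Abs_fset (fset U - {y \<in> lvl n. le y u})"
      have fU': "fset U' = fset U - {y \<in> lvl n. le y u}"
        unfolding U'_def by (rule fset_Abs) simp
      have "mixedpair (lvl n) (L, U')" unfolding mp_iff fU'
      proof (intro conjI ballI impI)
        fix x assume x: "x \<in> fset L"
        then obtain z where z: "z \<in> fset L" "z \<in> fset U" "le x z" using Lc by blast
        show "\<exists>z\<in>fset L \<inter> (fset U - {y \<in> lvl n. le y u}). le x z"
        proof (cases "le z u")
          case True
          then have "le x v" using z(3) v(2) le_trans by blast
          then show ?thesis using vL vU nvu by blast
        next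
          case False then show ?thesis using z by blast
        qed
      next
        fix x y assume "x \<in> fset U - {y \<in> lvl n. le y u}" "y \<in> lvl n" "le x y"
        then show "y \<in> fset U - {y \<in> lvl n. le y u}" using Uu U1 le_trans by blast
      qed (use L1 U1 Ld in auto)
      then have "f \<alpha> = (L, U')" by (rule max_upd[OF m]) (auto simp: LU fU')
      then have "U' = U" using LU by simp
      moreover have "u \<notin> fset U'" using fU' ul by simp
      ultimately show False using u LU by simp
    qed
  qed
  moreover have "u \<in> fset L" using inL u LU by simp
  ultimately show ?thesis using LU by simp
qed

lemma succ_max:
  fixes e :: "nat \<Rightarrow> ('a::finite) el"
  assumes eD: "e \<in> Dinf" and em: "\<And>n. e n \<in> maxlvl n" and r: "Rel False e \<alpha> u"
  shows "Rel True e \<alpha> u \<and> u \<in> Dinf \<and> (\<forall>n. u n \<in> maxlvl n)"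
proof -
  have uD: "u \<in> Dinf" and un: "\<And>n. u n |\<in>| comp False (e (Suc n)) \<alpha>" using r by (auto simp: Rel_def)
  have "u n |\<in>| comp True (e (Suc n)) \<alpha> \<and> u n \<in> maxlvl n" for n
  proof -
    have "e (Suc n) \<in> lvl (Suc n)" using eD by (simp add: Dinf_def del: lvl.simps)
    then obtain f where f: "e (Suc n) = Nd f" using lvl_Suc_ex by blast
    have "u n \<in> fset (snd (f \<alpha>))" using un[of n] f by (simp add: comp_def)
    from max_U[OF em[of "Suc n", unfolded f] this] show ?thesis using f by (simp add: comp_def)
  qed
  then show ?thesis using eD uD by (auto simp: Rel_def)
qed

lemma consist:
  fixes e :: "nat \<Rightarrow> ('a::finite) el"
  shows "e \<in> Dinf \<Longrightarrow> (\<And>n. e n \<in> maxlvl n) \<Longrightarrow> sat False e \<phi> \<Longrightarrow> sat True e \<phi>"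
proof (induction \<phi> arbitrary: e)
  case (Dia \<alpha> \<phi>)
  then obtain d' where d': "Rel False e \<alpha> d'" "sat False d' \<phi>" by auto
  from succ_max[OF Dia.prems(1) Dia.prems(2) d'(1)] have
    "Rel True e \<alpha> d'" "d' \<in> Dinf" "\<And>n. d' n \<in> maxlvl n" by auto
  then show ?case using Dia.IH d'(2) by auto
qed auto

lemma boxes:
  fixes e :: "nat \<Rightarrow> ('a::finite) el"
  shows "e \<in> Dinf \<Longrightarrow> (\<And>n. e n \<in> maxlvl n) \<Longrightarrow> sat True e (foldr Box w (Disj A (Neg A)))"
proof (induction w arbitrary: e)
  case Nil
  then show ?case using consist[of e A] by (auto simp: Disj_def)
next
  case (Cons \<delta> w)
  have "sat True d' (foldr Box w (Disj A (Neg A)))" if "Rel False e \<delta> d'" for d'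
  proof -
    from succ_max[OF Cons.prems(1) Cons.prems(2) that] have "d' \<in> Dinf" "\<And>n. d' n \<in> maxlvl n" by auto
    then show ?thesis by (rule Cons.IH)
  qed
  moreover have "sat True e (Box \<delta> \<chi>) \<longleftrightarrow> (\<forall>d'. Rel False e \<delta> d' \<longrightarrow> sat True d' \<chi>)" for \<chi>
    by (simp add: Box_def)
  ultimately show ?case by simp
qed

theorem lemma3p18:
  shows "(maxD :: (nat \<Rightarrow> 'a::enum el) set) \<subseteq> CPhi"
proof
  fix d :: "nat \<Rightarrow> 'a el" assume d: "d \<in> maxD"
  have dD: "d \<in> Dinf" using d by (simp add: maxD_def)
  have dm: "\<And>n. d n \<in> maxlvl n" using maxD_lvl[OF d] .
  show "d \<in> CPhi" unfolding CPhi_def PhiSet_def psi_def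
    using boxes[OF dD dm] dD by blast
qed

end
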